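(* Let $0<r_1<r_2<r_3$ satisfy \[ r_2(r_3-r_1)^3 - r_1(r_3+r_2)^3 - r_3(r_1+r_2)^3 \ \ge\ 0 . \] Then for every $\theta\in[0,\pi]$ we have $g_{13}(\theta)\le g_{12}(\theta)$ and $g_{13}(\theta)\le g_{23}(\theta)$.
   Context: For $i,j\in\{1,2,3\}$ and $\theta\in\mathbb R$ set $D_{ij}(\theta)=r_i^2+r_j^2-2r_ir_j\cos\theta$ and $g_{ij}(\theta)=\dfrac{r_ir_j\sin\theta}{D_{ij}(\theta)^{3/2}}$. *)

theory Defs
  imports Complex_Main
begin

definition D :: "real \<Rightarrow> real \<Rightarrow> real \<Rightarrow> real" where
  "D ri rj \<theta> = ri\<^sup>2 + rj\<^sup>2 - 2 * ri * rj * cos \<theta>"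

definition g :: "real \<Rightarrow> real \<Rightarrow> real \<Rightarrow> real" where
  "g ri rj \<theta> = ri * rj * sin \<theta> / (D ri rj \<theta>) powr (3/2)"

end

theory Submission
  imports Defs
begin

lemma cube_powr: "0 \<le> (x::real) \<Longrightarrow> (x^2) powr (3/2) = x^3"
proof (cases "x = 0")
  case True then show ?thesis by simp
next
  case False
  assume x: "0 \<le> x"
  then have xp: "0 < x" using False by simp
  have "x^2 = x powr 2" using xp by (simp add: powr_realpow)
  then have "(x^2) powr (3/2) = x powr (2 * (3/2))" by (simp add: powr_powr)
  also have "\<dots> = x powr (real 3)" by simp
  also have "\<dots> = x^3" using xp by (rule powr_realpow)
  finally show ?thesis .
qed

lemma D_bounds:
  fixes a b t :: real
  assumes "0 < a" "a < b"
  shows "0 < D a b t" "(b - a)^3 \<le> D a b t powr (3/2)" "D a b t powr (3/2) \<le> (a + b)^3"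
proof -
  have c1: "cos t \<le> 1" "-1 \<le> cos t" by auto
  have ab: "0 < a * b" using assms by simp
  have lo: "(b - a)^2 \<le> D a b t"
    using mult_left_mono[OF c1(1) less_imp_le[OF ab]]
    unfolding D_def by (simp add: power2_eq_square algebra_simps)
  have hi: "D a b t \<le> (a + b)^2"
    using mult_left_mono[OF c1(2) less_imp_le[OF ab]]
    unfolding D_def by (simp add: power2_eq_square algebra_simps)
  have p: "0 < (b - a)^2" using assms by simp
  show "0 < D a b t" using lo p by linarith
  have D0: "0 \<le> D a b t" using lo p by linarith
  have "(b-a)^3 = ((b-a)^2) powr (3/2)" using assms by (simp add: cube_powr)
  also have "\<dots> \<le> D a b t powr (3/2)" using lo p by (intro powr_mono2) auto
  finally show "(b - a)^3 \<le> D a b t powr (3/2)" .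
  have "D a b t powr (3/2) \<le> ((a+b)^2) powr (3/2)" using hi D0 by (intro powr_mono2) auto
  also have "\<dots> = (a+b)^3" using assms by (simp add: cube_powr)
  finally show "D a b t powr (3/2) \<le> (a + b)^3" .
qed

theorem lemma2p3:
  fixes r1 r2 r3 \<theta> :: real
  assumes "0 < r1" "r1 < r2" "r2 < r3"
    and "r2 * (r3 - r1)^3 - r1 * (r3 + r2)^3 - r3 * (r1 + r2)^3 \<ge> 0"
    and "0 \<le> \<theta>" "\<theta> \<le> pi"
  shows "g r1 r3 \<theta> \<le> g r1 r2 \<theta> \<and> g r1 r3 \<theta> \<le> g r2 r3 \<theta>"
proof -
  have s: "0 \<le> sin \<theta>" using assms by (simp add: sin_ge_zero)
  define A where "A = D r1 r3 \<theta> powr (3/2)"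
  define B where "B = D r1 r2 \<theta> powr (3/2)"
  define C where "C = D r2 r3 \<theta> powr (3/2)"
  have A: "(r3 - r1)^3 \<le> A" using D_bounds[of r1 r3 \<theta>] assms unfolding A_def by auto
  have B: "B \<le> (r1 + r2)^3" "0 < B" using D_bounds[of r1 r2 \<theta>] assms unfolding B_def by auto
  have C: "C \<le> (r2 + r3)^3" "0 < C" using D_bounds[of r2 r3 \<theta>] assms unfolding C_def by auto
  have d0: "0 < r3 - r1" using assms by simp
  have Ap: "0 < A" using A d0 by (meson less_le_trans zero_less_power)
  have t1: "r1 * (r3 + r2)^3 \<ge> 0" "r3 * (r1 + r2)^3 \<ge> 0" using assms by simp_all
  have k1: "r3 * B \<le> r2 * A"
  proof -
    have "r3 * B \<le> r3 * (r1+r2)^3" using B assms by simp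
    also have "\<dots> \<le> r2 * (r3-r1)^3" using assms(4) t1 by linarith
    also have "\<dots> \<le> r2 * A" using A assms by simp
    finally show ?thesis .
  qed
  have k2: "r1 * C \<le> r2 * A"
  proof -
    have "r1 * C \<le> r1 * (r2+r3)^3" using C assms by simp
    also have "\<dots> \<le> r2 * (r3-r1)^3" using assms(4) t1 by (simp add: add.commute)
    also have "\<dots> \<le> r2 * A" using A assms by simp
    finally show ?thesis .
  qed
  have g1: "g r1 r3 \<theta> \<le> g r1 r2 \<theta>"
  proof -
    have "r1 * sin \<theta> * (r3 * B) \<le> r1 * sin \<theta> * (r2 * A)"
      using k1 s assms by (intro mult_left_mono) auto
    then have "r1 * r3 * sin \<theta> / A \<le> r1 * r2 * sin \<theta> / B"
      using Ap B by (simp add: divide_simps algebra_simps)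
    then show ?thesis unfolding g_def A_def B_def .
  qed
  have g2: "g r1 r3 \<theta> \<le> g r2 r3 \<theta>"
  proof -
    have "r3 * sin \<theta> * (r1 * C) \<le> r3 * sin \<theta> * (r2 * A)"
      using k2 s assms by (intro mult_left_mono) auto
    then have "r1 * r3 * sin \<theta> / A \<le> r2 * r3 * sin \<theta> / C"
      using Ap C by (simp add: divide_simps algebra_simps)
    then show ?thesis unfolding g_def A_def C_def .
  qed
  show ?thesis using g1 g2 by simp
qed

end
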